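(* Let $\lambda$ be an infinite cardinal and let $G$ be a graph on vertex set $\lambda^+$ with chromatic number $\lambda^+$. Then there is a function $f:\lambda^+\to\lambda^+$ such that for every closed unbounded set $C\subseteq\lambda^+$, the subgraph of $G$ induced on $\bigcup\{[\alpha,f(\alpha)]:\alpha\in C\}$ has chromatic number $\lambda^+$.
   Context: $[\alpha,\beta]$ denotes the interval of ordinals $\{\gamma:\alpha\le\gamma\le\beta\}$ (empty if $\beta<\alpha$). *)

theory Defs
  imports Main
begin

text \<open>Ordinals are represented by well-order relations r; the ordinal ordering
  is membership in r (reflexive on Field r).\<close>

definition proper_coloring :: "'v set \<Rightarrow> ('v \<Rightarrow> 'v \<Rightarrow> bool) \<Rightarrow> ('v \<Rightarrow> 'c) \<Rightarrow> bool" where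
  "proper_coloring S E c \<longleftrightarrow> (\<forall>x\<in>S. \<forall>y\<in>S. E x y \<longrightarrow> c x \<noteq> c y)"

text \<open>Colours are taken in the vertex type, which loses no generality since a
  colouring of S uses at most |S| colours.\<close>
definition has_chromatic_number :: "'v set \<Rightarrow> ('v \<Rightarrow> 'v \<Rightarrow> bool) \<Rightarrow> 'k rel \<Rightarrow> bool" where
  "has_chromatic_number S E \<kappa> \<longleftrightarrow>
     (\<exists>c::'v \<Rightarrow> 'v. proper_coloring S E c \<and> (card_of (c ` S), \<kappa>) \<in> ordIso) \<and>
     (\<forall>c::'v \<Rightarrow> 'v. proper_coloring S E c \<longrightarrow> (\<kappa>, card_of (c ` S)) \<in> ordLeq)"

definition unbounded_in :: "'a rel \<Rightarrow> 'a set \<Rightarrow> bool" where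
  "unbounded_in r C \<longleftrightarrow> (\<forall>\<alpha>\<in>Field r. \<exists>\<beta>\<in>C. (\<alpha>, \<beta>) \<in> r)"

definition is_lub :: "'a rel \<Rightarrow> 'a set \<Rightarrow> 'a \<Rightarrow> bool" where
  "is_lub r A \<gamma> \<longleftrightarrow> \<gamma> \<in> Field r \<and> (\<forall>a\<in>A. (a, \<gamma>) \<in> r) \<and>
     (\<forall>\<beta>\<in>Field r. (\<forall>a\<in>A. (a, \<beta>) \<in> r) \<longrightarrow> (\<gamma>, \<beta>) \<in> r)"

definition closed_in :: "'a rel \<Rightarrow> 'a set \<Rightarrow> bool" where
  "closed_in r C \<longleftrightarrow> (\<forall>A \<subseteq> C. A \<noteq> {} \<longrightarrow> (\<forall>\<gamma>. is_lub r A \<gamma> \<longrightarrow> \<gamma> \<in> C))"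

definition club :: "'a rel \<Rightarrow> 'a set \<Rightarrow> bool" where
  "club r C \<longleftrightarrow> C \<subseteq> Field r \<and> closed_in r C \<and> unbounded_in r C"

definition ord_interval :: "'a rel \<Rightarrow> 'a \<Rightarrow> 'a \<Rightarrow> 'a set" where
  "ord_interval r \<alpha> \<beta> = {\<gamma> \<in> Field r. (\<alpha>, \<gamma>) \<in> r \<and> (\<gamma>, \<beta>) \<in> r}"

end

theory Submission imports Defs "HOL-Library.Nat_Bijection" begin
unbundle cardinal_syntax

lemma wo_trans: "Well_order r \<Longrightarrow> (a,b)\<in>r \<Longrightarrow> (b,c)\<in>r \<Longrightarrow> (a,c)\<in>r"
  using wo_rel.TRANS[of r] unfolding wo_rel_def trans_def by blast
lemma wo_refl: "Well_order r \<Longrightarrow> a \<in> Field r \<Longrightarrow> (a,a)\<in>r"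
  using wo_rel.REFL[of r] unfolding wo_rel_def refl_on_def by blast
lemma wo_antisym: "Well_order r \<Longrightarrow> (a,b)\<in>r \<Longrightarrow> (b,a)\<in>r \<Longrightarrow> a = b"
  using wo_rel.ANTISYM[of r] unfolding wo_rel_def antisym_def by blast
lemma wo_total: "Well_order r \<Longrightarrow> a \<in> Field r \<Longrightarrow> b \<in> Field r \<Longrightarrow> (a,b)\<in>r \<or> (b,a)\<in>r"
  using wo_rel.TOTALS[of r] unfolding wo_rel_def by blast

lemma lub_ex:
  assumes W: "Well_order r" and A: "A \<subseteq> Field r" and b: "b \<in> Field r" "\<forall>a\<in>A. (a,b)\<in>r"
  shows "\<exists>\<gamma>. is_lub r A \<gamma>"
proof -
  let ?U = "{\<beta>\<in>Field r. \<forall>a\<in>A. (a,\<beta>)\<in>r}"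
  have U: "?U \<subseteq> Field r" "?U \<noteq> {}" using b by auto
  have wr: "wo_rel r" using W by (simp add: wo_rel_def)
  have "wo_rel.minim r ?U \<in> ?U" using wo_rel.minim_in[OF wr U] .
  moreover have "\<forall>\<beta>\<in>?U. (wo_rel.minim r ?U, \<beta>) \<in> r" using wo_rel.minim_least[OF wr U(1)] by blast
  ultimately show ?thesis unfolding is_lub_def by blast
qed

lemma cs_facts:
  fixes lam :: "'a rel"
  assumes C: "Card_order lam" and I: "\<not> finite (Field lam)"
  shows "Well_order (cardSuc lam)"
    and "\<forall>a\<in>Field (cardSuc lam). \<exists>b\<in>Field (cardSuc lam). a \<noteq> b \<and> (a,b)\<in>cardSuc lam"
    and "\<forall>s::nat\<Rightarrow>'a set. range s \<subseteq> Field (cardSuc lam) \<longrightarrow> (\<exists>b\<in>Field (cardSuc lam). \<forall>n. (s n, b)\<in>cardSuc lam)"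
proof -
  let ?r = "cardSuc lam"
  have W: "Well_order ?r" using C by (rule cardSuc_Well_order)
  show "Well_order ?r" by fact
  have CO: "Card_order ?r" using C by (rule cardSuc_Card_order)
  have lr: "lam <o ?r" using C by (rule cardSuc_greater)
  have small: "|A| \<le>o lam \<Longrightarrow> |A| <o ?r" for A :: "'a set set"
    using cardSuc_ordLeq_ordLess[OF C card_of_Card_order] by blast
  have small2: "|A| <o ?r \<Longrightarrow> |A| \<le>o lam" for A :: "'a set set"
    using cardSuc_ordLeq_ordLess[OF C card_of_Card_order] by blast
  have nat_le: "|UNIV::nat set| \<le>o lam"
  proof -
    have "|UNIV::nat set| \<le>o |Field lam|" using I infinite_iff_card_of_nat by blast
    thus ?thesis using card_of_Field_ordIso[OF C] ordLeq_ordIso_trans by blast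
  qed
  show "\<forall>a\<in>Field ?r. \<exists>b\<in>Field ?r. a \<noteq> b \<and> (a,b)\<in>?r"
  proof (rule ccontr)
    assume "\<not> ?thesis"
    then obtain a where a: "a \<in> Field ?r" "\<forall>b\<in>Field ?r. a = b \<or> (a,b) \<notin> ?r" by blast
    have "Field ?r \<subseteq> insert a (underS ?r a)"
      using a wo_total[OF W] unfolding underS_def by blast
    have us: "|underS ?r a| \<le>o lam" using small2 card_of_underS[OF CO a(1)] by blast
    have "infinite (Field ?r)" using Cinfinite_cardSuc[of lam] C I unfolding cinfinite_def by auto
    have s1: "|{a}| \<le>o lam"
    proof -
      have "Field lam \<noteq> {}" using I by auto
      hence "|{a}| \<le>o |Field lam|" by (rule card_of_singl_ordLeq)
      thus ?thesis using card_of_Field_ordIso[OF C] ordLeq_ordIso_trans by blast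
    qed
    have "|{a} \<union> underS ?r a| <o ?r"
      using card_of_Un_ordLess_infinite_Field[OF \<open>infinite (Field ?r)\<close> CO small[OF s1] small[OF us]] .
    moreover have "|Field ?r| \<le>o |{a} \<union> underS ?r a|"
      using \<open>Field ?r \<subseteq> insert a (underS ?r a)\<close> card_of_mono1 by (metis insert_is_Un)
    ultimately have "|Field ?r| <o ?r" using ordLeq_ordLess_trans by blast
    thus False using card_of_Field_ordIso[OF CO] not_ordLess_ordIso by blast
  qed
  show "\<forall>s::nat\<Rightarrow>'a set. range s \<subseteq> Field ?r \<longrightarrow> (\<exists>b\<in>Field ?r. \<forall>n. (s n, b)\<in>?r)"
  proof (intro allI impI)
    fix s :: "nat \<Rightarrow> 'a set" assume s: "range s \<subseteq> Field ?r"
    have reg: "regularCard ?r" using infinite_cardSuc_regularCard[OF I C] .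
    have "|range s| \<le>o |UNIV::nat set|" by (rule card_of_image)
    hence "|range s| <o ?r" using nat_le small ordLeq_transitive by blast
    hence "\<not> cofinal (range s) ?r" using reg s unfolding regularCard_def
      using not_ordLess_ordIso by blast
    then obtain b where "b \<in> Field ?r" "\<forall>n. b = s n \<or> (b, s n) \<notin> ?r" unfolding cofinal_def by blast
    then have b: "b \<in> Field ?r" "\<forall>n. b = s n \<or> (b, s n) \<notin> ?r" by auto
    have "(s n, b) \<in> ?r" for n
    proof -
      have sn: "s n \<in> Field ?r" using s by auto
      show ?thesis using b(2)[rule_format, of n] wo_refl[OF W sn] wo_total[OF W sn b(1)] by auto
    qed
    thus "\<exists>b\<in>Field ?r. \<forall>n. (s n, b)\<in>?r" using b(1) by blast
  qed
qed
lemma closedD: "closed_in r C \<Longrightarrow> A \<subseteq> C \<Longrightarrow> A \<noteq> {} \<Longrightarrow> is_lub r A \<gamma> \<Longrightarrow> \<gamma> \<in> C"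
  unfolding closed_in_def by blast
lemma clubD: "club r C \<Longrightarrow> C \<subseteq> Field r" "club r C \<Longrightarrow> closed_in r C" "club r C \<Longrightarrow> unbounded_in r C"
  unfolding club_def by auto

definition nxt :: "'b rel \<Rightarrow> 'b set \<Rightarrow> 'b \<Rightarrow> 'b" where
  "nxt r D \<alpha> = wo_rel.minim r {\<beta>\<in>D. \<alpha> \<noteq> \<beta> \<and> (\<alpha>,\<beta>)\<in>r}"

primrec Dseq :: "'b rel \<Rightarrow> (('b \<Rightarrow> 'b) \<Rightarrow> 'b set) \<Rightarrow> nat \<Rightarrow> 'b set" where
  "Dseq r Cf 0 = Field r"
| "Dseq r Cf (Suc n) = Dseq r Cf n \<inter> Cf (nxt r (Dseq r Cf n))"

context
  fixes r :: "'b rel"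
  assumes W: "Well_order r"
    and NM: "\<forall>a\<in>Field r. \<exists>b\<in>Field r. a \<noteq> b \<and> (a,b)\<in>r"
    and CB: "\<forall>s::nat\<Rightarrow>'b. range s \<subseteq> Field r \<longrightarrow> (\<exists>b\<in>Field r. \<forall>n. (s n, b)\<in>r)"
    and NE: "Field r \<noteq> {}"
begin

lemma chain_mono:
  assumes st: "\<forall>m. (s m, s (Suc m)) \<in> r" and le: "m \<le> m'" and f: "s m \<in> Field r"
  shows "(s m, s m') \<in> r"
  using le
proof (induction m' rule: dec_induct)
  case base then show ?case using wo_refl[OF W f] .
next
  case (step k)
  have "(s k, s (Suc k)) \<in> r" using st by simp
  then show ?case using wo_trans[OF W step.IH] by simp
qed

lemma lub_cofinal:
  assumes "is_lub r S \<gamma>" "T \<subseteq> S" "\<forall>a\<in>S. \<exists>t\<in>T. (a,t)\<in>r"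
  shows "is_lub r T \<gamma>"
proof -
  have g: "\<gamma> \<in> Field r" "\<forall>a\<in>S. (a, \<gamma>) \<in> r"
    "\<forall>\<beta>\<in>Field r. (\<forall>a\<in>S. (a, \<beta>) \<in> r) \<longrightarrow> (\<gamma>, \<beta>) \<in> r"
    using assms(1) unfolding is_lub_def by auto
  have "\<forall>a\<in>T. (a, \<gamma>) \<in> r" using g(2) assms(2) by auto
  moreover have "(\<gamma>, \<beta>) \<in> r" if b: "\<beta> \<in> Field r" "\<forall>t\<in>T. (t, \<beta>) \<in> r" for \<beta>
  proof -
    have "(a, \<beta>) \<in> r" if a: "a \<in> S" for a
    proof -
      obtain t where t: "t \<in> T" "(a,t) \<in> r" using assms(3) a by auto
      show ?thesis using wo_trans[OF W t(2)] b(2) t(1) by auto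
    qed
    thus ?thesis using g(3) b(1) by auto
  qed
  ultimately show ?thesis using g(1) unfolding is_lub_def by auto
qed

lemma seq_lub:
  fixes s :: "nat \<Rightarrow> 'b"
  assumes "range s \<subseteq> Field r"
  shows "\<exists>\<gamma>. is_lub r (range s) \<gamma>"
proof -
  obtain b where b: "b \<in> Field r" "\<forall>n. (s n, b)\<in>r" using CB[rule_format, OF assms] by blast
  have "\<forall>a\<in>range s. (a,b)\<in>r" using b(2) by auto
  thus ?thesis using lub_ex[OF W assms b(1)] by simp
qed

lemma club_Inter:
  assumes K: "\<forall>n::nat. club r (K n)"
  shows "club r (\<Inter>n. K n)"
proof -
  have Kn: "K n \<subseteq> Field r" "closed_in r (K n)" "unbounded_in r (K n)" for n
    using K[rule_format, of n] unfolding club_def by auto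
  have sub: "(\<Inter>n. K n) \<subseteq> Field r" using Kn(1)[of 0] by auto
  have clK: "\<gamma> \<in> K n" if "A \<subseteq> K n" "A \<noteq> {}" "is_lub r A \<gamma>" for A \<gamma> n
    using Kn(2)[of n] that unfolding closed_in_def by blast
  have cl: "closed_in r (\<Inter>n. K n)"
    unfolding closed_in_def
  proof (intro allI impI)
    fix A \<gamma> assume A: "A \<subseteq> (\<Inter>n. K n)" "A \<noteq> {}" "is_lub r A \<gamma>"
    show "\<gamma> \<in> (\<Inter>n. K n)"
    proof (rule INT_I)
      fix n show "\<gamma> \<in> K n" using A clK[of A n \<gamma>] by auto
    qed
  qed
  have ubK: "\<exists>y. y \<in> K n \<and> (x,y)\<in>r" if "x \<in> Field r" for x n
    using Kn(3)[of n] that unfolding unbounded_in_def by blast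
  have ub: "unbounded_in r (\<Inter>n. K n)"
    unfolding unbounded_in_def
  proof
    fix \<alpha> assume a: "\<alpha> \<in> Field r"
    define g where "g m = fst (prod_decode m)" for m
    define s where "s = rec_nat \<alpha> (\<lambda>m x. SOME y. y \<in> K (g m) \<and> (x,y)\<in>r)"
    have s0: "s 0 = \<alpha>" unfolding s_def by simp
    have sS: "s (Suc m) = (SOME y. y \<in> K (g m) \<and> (s m,y)\<in>r)" for m unfolding s_def by simp
    have step: "s (Suc m) \<in> K (g m) \<and> (s m, s (Suc m)) \<in> r" if "s m \<in> Field r" for m
      unfolding sS[of m] using ubK[OF that, of "g m"] by (rule someI_ex)
    have P: "s m \<in> Field r \<and> s (Suc m) \<in> K (g m) \<and> (s m, s (Suc m)) \<in> r" for m
    proof (induction m)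
      case 0
      then show ?case using step[of 0] s0 a by simp
    next
      case (Suc m)
      have f: "s (Suc m) \<in> Field r" using Suc Kn(1) by blast
      then show ?case using step[OF f] by simp
    qed
    have rs: "range s \<subseteq> Field r" using P by blast
    have st: "\<forall>m. (s m, s (Suc m)) \<in> r" using P by blast
    obtain \<gamma> where g: "is_lub r (range s) \<gamma>" using seq_lub[OF rs] by blast
    have "\<gamma> \<in> K n" for n
    proof -
      let ?T = "(\<lambda>m. s (Suc m)) ` {m. g m = n}"
      have gn: "g (prod_encode (n,m)) = n" for m unfolding g_def by simp
      have T: "?T \<subseteq> range s" by blast
      have cof: "\<forall>a\<in>range s. \<exists>t\<in>?T. (a,t)\<in>r"
      proof
        fix a assume "a \<in> range s" then obtain m where m: "a = s m" by blast
        have "m \<le> Suc (prod_encode (n,m))" using le_prod_encode_2[of m n] by simp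
        hence "(s m, s (Suc (prod_encode (n,m)))) \<in> r" using chain_mono[OF st _ ] P by blast
        moreover have "s (Suc (prod_encode (n,m))) \<in> ?T" using gn by blast
        ultimately show "\<exists>t\<in>?T. (a,t)\<in>r" using m by blast
      qed
      have "is_lub r ?T \<gamma>" using lub_cofinal[OF g T cof] .
      moreover have "?T \<subseteq> K n" using P by blast
      moreover have "?T \<noteq> {}" using gn by blast
      ultimately show ?thesis using clK by blast
    qed
    moreover have "(\<alpha>, \<gamma>) \<in> r" using g s0 unfolding is_lub_def by (metis rangeI)
    ultimately show "\<exists>\<beta>\<in>\<Inter>n. K n. (\<alpha>, \<beta>) \<in> r" by blast
  qed
  show ?thesis using sub cl ub unfolding club_def by blast
qed

lemma club_Int: "club r A \<Longrightarrow> club r B \<Longrightarrow> club r (A \<inter> B)"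
proof -
  assume "club r A" "club r B"
  hence "club r (\<Inter>n. if n = (0::nat) then A else B)" by (intro club_Inter) auto
  moreover have "(\<Inter>n. if n = (0::nat) then A else B) = A \<inter> B"
  proof (rule set_eqI)
    fix x show "x \<in> (\<Inter>n. if n = (0::nat) then A else B) \<longleftrightarrow> x \<in> A \<inter> B"
    proof
      assume h: "x \<in> (\<Inter>n. if n = (0::nat) then A else B)"
      have "x \<in> (if (0::nat) = 0 then A else B)" "x \<in> (if (1::nat) = 0 then A else B)" using h by blast+
      thus "x \<in> A \<inter> B" by simp
    qed simp
  qed
  ultimately show ?thesis by simp
qed

lemma club_Field: "club r (Field r)"
  unfolding club_def closed_in_def unbounded_in_def is_lub_def using wo_refl[OF W] by blast

lemma nxt_props:
  assumes D: "club r D" and a: "\<alpha> \<in> Field r"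
  shows "nxt r D \<alpha> \<in> D" "\<alpha> \<noteq> nxt r D \<alpha>" "(\<alpha>, nxt r D \<alpha>) \<in> r"
    "\<And>\<beta>. \<beta> \<in> D \<Longrightarrow> \<alpha> \<noteq> \<beta> \<Longrightarrow> (\<alpha>,\<beta>)\<in>r \<Longrightarrow> (nxt r D \<alpha>, \<beta>) \<in> r"
proof -
  let ?U = "{\<beta>\<in>D. \<alpha> \<noteq> \<beta> \<and> (\<alpha>,\<beta>)\<in>r}"
  have wr: "wo_rel r" using W by (simp add: wo_rel_def)
  have sub: "?U \<subseteq> Field r" using D unfolding club_def by blast
  obtain a' where a': "a' \<in> Field r" "\<alpha> \<noteq> a'" "(\<alpha>,a')\<in>r" using NM a by blast
  obtain b where b: "b \<in> D" "(a',b)\<in>r" using D a' unfolding club_def unbounded_in_def by blast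
  have "\<alpha> \<noteq> b" using wo_antisym[OF W] a' b by blast
  moreover have "(\<alpha>,b)\<in>r" using wo_trans[OF W] a' b by blast
  ultimately have ne: "?U \<noteq> {}" using b by blast
  have "nxt r D \<alpha> \<in> ?U" unfolding nxt_def using wo_rel.minim_in[OF wr sub ne] .
  thus "nxt r D \<alpha> \<in> D" "\<alpha> \<noteq> nxt r D \<alpha>" "(\<alpha>, nxt r D \<alpha>) \<in> r" by auto
  show "\<And>\<beta>. \<beta> \<in> D \<Longrightarrow> \<alpha> \<noteq> \<beta> \<Longrightarrow> (\<alpha>,\<beta>)\<in>r \<Longrightarrow> (nxt r D \<alpha>, \<beta>) \<in> r"
    unfolding nxt_def using wo_rel.minim_least[OF wr sub] by blast
qed


lemma cover:
  assumes Cf: "\<forall>f. (\<forall>\<alpha>\<in>Field r. f \<alpha> \<in> Field r) \<longrightarrow> club r (Cf f)"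
  shows "(\<forall>n. \<forall>\<alpha>\<in>Field r. nxt r (Dseq r Cf n) \<alpha> \<in> Field r) \<and>
    (\<exists>d0\<in>Field r. \<forall>v\<in>Field r. (d0,v)\<in>r \<longrightarrow>
      (\<exists>n. v \<in> (\<Union>\<alpha>\<in>Cf (nxt r (Dseq r Cf n)). ord_interval r \<alpha> (nxt r (Dseq r Cf n) \<alpha>))))"
proof -
  let ?D = "Dseq r Cf"
  have Dc: "club r (?D n)" for n
  proof (induction n)
    case 0 then show ?case using club_Field by simp
  next
    case (Suc n)
    have "\<forall>\<alpha>\<in>Field r. nxt r (?D n) \<alpha> \<in> Field r"
      using nxt_props(1)[OF Suc] Suc unfolding club_def by blast
    hence "club r (Cf (nxt r (?D n)))" using Cf by blast
    thus ?case using club_Int[OF Suc] by simp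
  qed
  have mapsF: "\<forall>n. \<forall>\<alpha>\<in>Field r. nxt r (?D n) \<alpha> \<in> Field r"
    using nxt_props(1)[OF Dc] Dc unfolding club_def by blast
  have dec: "n \<le> m \<Longrightarrow> ?D m \<subseteq> ?D n" for n m
    by (induction m rule: dec_induct) auto
  let ?DD = "\<Inter>n. ?D n"
  have DDc: "club r ?DD" using club_Inter Dc by blast
  obtain e where e: "e \<in> Field r" using NE by blast
  obtain d0 where d0: "d0 \<in> ?DD" "(e,d0)\<in>r" using DDc e unfolding club_def unbounded_in_def by blast
  have d0F: "d0 \<in> Field r" using d0 DDc unfolding club_def by blast
  have "\<forall>v\<in>Field r. (d0,v)\<in>r \<longrightarrow>
      (\<exists>n. v \<in> (\<Union>\<alpha>\<in>Cf (nxt r (?D n)). ord_interval r \<alpha> (nxt r (?D n) \<alpha>)))"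
  proof (intro ballI impI)
    fix v assume vF: "v \<in> Field r" and dv: "(d0,v)\<in>r"
    let ?A = "{d\<in>?DD. (d,v)\<in>r}"
    have AF: "?A \<subseteq> Field r" using DDc unfolding club_def by blast
    obtain \<alpha> where al: "is_lub r ?A \<alpha>" using lub_ex[OF W AF vF] by blast
    have Ane: "?A \<noteq> {}" using d0 dv by blast
    have aD: "\<alpha> \<in> ?D n" for n
    proof -
      have "?A \<subseteq> ?D n" by blast
      thus ?thesis using closedD[OF clubD(2)[OF Dc[of n]] _ Ane al] by blast
    qed
    hence aDD: "\<alpha> \<in> ?DD" by blast
    have aF: "\<alpha> \<in> Field r" using al unfolding is_lub_def by blast
    have av: "(\<alpha>, v) \<in> r" using al vF unfolding is_lub_def by blast
    define \<beta> where "\<beta> n = nxt r (?D n) \<alpha>" for n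
    have bD: "\<beta> n \<in> ?D n" "\<alpha> \<noteq> \<beta> n" "(\<alpha>, \<beta> n) \<in> r" for n
      unfolding \<beta>_def using nxt_props[OF Dc aF] by auto
    have bF: "\<beta> n \<in> Field r" for n using bD Dc unfolding club_def by blast
    have bmono: "\<forall>m. (\<beta> m, \<beta> (Suc m)) \<in> r"
    proof
      fix m
      have "\<beta> (Suc m) \<in> ?D m" using bD(1)[of "Suc m"] by simp
      thus "(\<beta> m, \<beta> (Suc m)) \<in> r" unfolding \<beta>_def
        using nxt_props(4)[OF Dc aF] bD(2,3)[of "Suc m"] unfolding \<beta>_def by blast
    qed
    obtain \<gamma> where g: "is_lub r (range \<beta>) \<gamma>" using seq_lub bF by blast
    have gD: "\<gamma> \<in> ?D n" for n
    proof -
      let ?T = "\<beta> ` {n..}"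
      have cof: "\<forall>a\<in>range \<beta>. \<exists>t\<in>?T. (a,t)\<in>r"
      proof
        fix a assume "a \<in> range \<beta>" then obtain m where m: "a = \<beta> m" by blast
        have "(\<beta> m, \<beta> (max m n)) \<in> r" using chain_mono[OF bmono _ bF] by simp
        thus "\<exists>t\<in>?T. (a,t)\<in>r" using m by auto
      qed
      have "is_lub r ?T \<gamma>" using lub_cofinal[OF g _ cof] by blast
      moreover have "?T \<subseteq> ?D n" using bD(1) dec by blast
      moreover have "?T \<noteq> {}" by blast
      ultimately show ?thesis using closedD[OF clubD(2)[OF Dc[of n]]] by blast
    qed
    have "\<exists>n. (v, \<beta> n) \<in> r"
    proof (rule ccontr)
      assume "\<not> ?thesis"
      hence "\<forall>n. (\<beta> n, v) \<in> r" using wo_total[OF W vF bF] by blast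
      hence "(\<gamma>, v) \<in> r" using g vF unfolding is_lub_def by blast
      hence "\<gamma> \<in> ?A" using gD by blast
      hence "(\<gamma>, \<alpha>) \<in> r" using al unfolding is_lub_def by blast
      moreover have "(\<beta> 0, \<gamma>) \<in> r" using g unfolding is_lub_def by blast
      ultimately have "(\<beta> 0, \<alpha>) \<in> r" using wo_trans[OF W] by blast
      thus False using bD(2,3)[of 0] wo_antisym[OF W] by blast
    qed
    then obtain n where n: "(v, \<beta> n) \<in> r" by blast
    have "\<alpha> \<in> Cf (nxt r (?D n))" using aD[of "Suc n"] by simp
    moreover have "v \<in> ord_interval r \<alpha> (nxt r (?D n) \<alpha>)"
      unfolding ord_interval_def using vF av n unfolding \<beta>_def by blast
    ultimately show "\<exists>n. v \<in> (\<Union>\<alpha>\<in>Cf (nxt r (?D n)). ord_interval r \<alpha> (nxt r (?D n) \<alpha>))" by blast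
  qed
  thus ?thesis using mapsF d0F by blast
qed

end

theorem lemma3:
  fixes lam :: "'a rel" and E :: "'a set \<Rightarrow> 'a set \<Rightarrow> bool"
  assumes "Card_order lam" and "\<not> finite (Field lam)"
    and "\<forall>x y. E x y \<longrightarrow> x \<in> Field (cardSuc lam) \<and> y \<in> Field (cardSuc lam)"
    and "\<forall>x y. E x y \<longrightarrow> E y x"
    and "\<forall>x. \<not> E x x"
    and "has_chromatic_number (Field (cardSuc lam)) E (cardSuc lam)"
  shows "\<exists>f. (\<forall>\<alpha>\<in>Field (cardSuc lam). f \<alpha> \<in> Field (cardSuc lam)) \<and>
    (\<forall>C. club (cardSuc lam) C \<longrightarrow>
       has_chromatic_number (\<Union>\<alpha>\<in>C. ord_interval (cardSuc lam) \<alpha> (f \<alpha>)) E (cardSuc lam))"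
proof (rule ccontr)
  let ?r = "cardSuc lam"
  let ?F = "Field ?r"
  let ?X = "\<lambda>f C. \<Union>\<alpha>\<in>C. ord_interval ?r \<alpha> (f \<alpha>)"
  note C = assms(1) and I = assms(2)
  note cs = cs_facts[OF C I]
  note W = cs(1)
  have NE: "?F \<noteq> {}" using Field_cardSuc_not_empty[OF C] .
  have CO: "Card_order ?r" using C by (rule cardSuc_Card_order)
  have lr: "lam <o ?r" using C by (rule cardSuc_greater)
  have FL: "|Field lam| =o lam" using card_of_Field_ordIso[OF C] .
  have FR: "|?F| =o ?r" using card_of_Field_ordIso[OF CO] .
  have small2: "|A| <o ?r \<Longrightarrow> |A| \<le>o lam" for A :: "'a set set"
    using cardSuc_ordLeq_ordLess[OF C card_of_Card_order] by blast
  have irr: "\<forall>x. \<not> E x x" by fact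
  have bad: "\<exists>(c::'a set \<Rightarrow> 'a set). proper_coloring S E c \<and> |c ` S| \<le>o lam"
    if S: "S \<subseteq> ?F" and nh: "\<not> has_chromatic_number S E ?r" for S
  proof -
    have "\<not> (\<forall>(c::'a set \<Rightarrow> 'a set). proper_coloring S E c \<longrightarrow> ?r \<le>o card_of (c ` S))"
    proof
      assume L: "\<forall>(c::'a set \<Rightarrow> 'a set). proper_coloring S E c \<longrightarrow> ?r \<le>o card_of (c ` S)"
      have pid: "proper_coloring S E id" unfolding proper_coloring_def using irr by auto
      have "?r \<le>o |id ` S|" using L pid by blast
      moreover have "|id ` S| \<le>o ?r" using card_of_mono1[OF S] FR ordLeq_ordIso_trans by simp
      ultimately have "|id ` S| =o ?r" using ordIso_iff_ordLeq by blast
      hence "has_chromatic_number S E ?r" unfolding has_chromatic_number_def using L pid by blast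
      thus False using nh by blast
    qed
    then obtain c :: "'a set \<Rightarrow> 'a set" where c: "proper_coloring S E c" "\<not> ?r \<le>o |c ` S|" by blast
    have "|c ` S| <o ?r" using c(2) not_ordLeq_iff_ordLess[OF card_of_Well_order W] by blast
    thus ?thesis using c(1) small2 by blast
  qed
  assume H: "\<not> (\<exists>f. (\<forall>\<alpha>\<in>?F. f \<alpha> \<in> ?F) \<and> (\<forall>C. club ?r C \<longrightarrow> has_chromatic_number (?X f C) E ?r))"
  define Cf where "Cf f = (SOME C. club ?r C \<and> \<not> has_chromatic_number (?X f C) E ?r)" for f
  have Cf: "club ?r (Cf f) \<and> \<not> has_chromatic_number (?X f (Cf f)) E ?r" if "\<forall>\<alpha>\<in>?F. f \<alpha> \<in> ?F" for f
  proof -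
    have "\<exists>C. club ?r C \<and> \<not> has_chromatic_number (?X f C) E ?r" using H that by blast
    thus ?thesis unfolding Cf_def by (rule someI_ex)
  qed
  have cov: "(\<forall>n. \<forall>\<alpha>\<in>?F. nxt ?r (Dseq ?r Cf n) \<alpha> \<in> ?F) \<and>
    (\<exists>d0\<in>?F. \<forall>v\<in>?F. (d0,v)\<in>?r \<longrightarrow>
      (\<exists>n. v \<in> ?X (nxt ?r (Dseq ?r Cf n)) (Cf (nxt ?r (Dseq ?r Cf n)))))"
    using cover[OF W cs(2) cs(3) NE] Cf by blast
  define Xn where "Xn n = ?X (nxt ?r (Dseq ?r Cf n)) (Cf (nxt ?r (Dseq ?r Cf n)))" for n
  obtain d0 where d0: "d0 \<in> ?F" "\<forall>v\<in>?F. (d0,v)\<in>?r \<longrightarrow> (\<exists>n. v \<in> Xn n)"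
    using cov unfolding Xn_def by blast
  have XnF: "Xn n \<subseteq> ?F" for n unfolding Xn_def ord_interval_def by blast
  have Xnbad: "\<not> has_chromatic_number (Xn n) E ?r" for n
    using Cf cov unfolding Xn_def by blast
  define cc where "cc n = (SOME (c::'a set \<Rightarrow> 'a set). proper_coloring (Xn n) E c \<and> |c ` Xn n| \<le>o lam)" for n
  have cc: "proper_coloring (Xn n) E (cc n) \<and> |cc n ` Xn n| \<le>o lam" for n
    unfolding cc_def using bad[OF XnF Xnbad] by (rule someI_ex)
  define c' where "c' v = (if \<exists>n. v \<in> Xn n then (Suc (LEAST n. v \<in> Xn n), cc (LEAST n. v \<in> Xn n) v) else (0, v))" for v
  have pc': "proper_coloring ?F E c'"
    unfolding proper_coloring_def
  proof (intro ballI impI)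
    fix x y assume x: "x \<in> ?F" and y: "y \<in> ?F" and e: "E x y"
    show "c' x \<noteq> c' y"
    proof
      assume eq: "c' x = c' y"
      show False
      proof (cases "\<exists>n. x \<in> Xn n")
        case True
        hence yT: "\<exists>n. y \<in> Xn n" using eq unfolding c'_def by (auto split: if_splits)
        let ?n = "LEAST n. x \<in> Xn n"
        have same: "(LEAST n. y \<in> Xn n) = ?n" "cc ?n x = cc ?n y" using eq True yT unfolding c'_def by auto
        have "x \<in> Xn ?n" using True by (rule LeastI_ex)
        moreover have "y \<in> Xn ?n" using yT same(1) by (metis LeastI_ex)
        ultimately show False using cc[of ?n] e same(2) unfolding proper_coloring_def by blast
      next
        case False
        hence yF: "\<not> (\<exists>n. y \<in> Xn n)" using eq unfolding c'_def by (auto split: if_splits)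
        hence "x = y" using eq False unfolding c'_def by simp
        thus False using e irr by blast
      qed
    qed
  qed
  define Aset where "Aset n = (if n = 0 then underS ?r d0 else cc (n - 1) ` Xn (n - 1))" for n
  have img: "c' ` ?F \<subseteq> (\<Union>n. {n} \<times> Aset n)"
  proof
    fix z assume "z \<in> c' ` ?F"
    then obtain v where v: "v \<in> ?F" "z = c' v" by blast
    show "z \<in> (\<Union>n. {n} \<times> Aset n)"
    proof (cases "\<exists>n. v \<in> Xn n")
      case True
      let ?n = "LEAST n. v \<in> Xn n"
      have "v \<in> Xn ?n" using True by (rule LeastI_ex)
      hence "z \<in> {Suc ?n} \<times> Aset (Suc ?n)" using v True unfolding c'_def Aset_def by simp
      thus ?thesis by blast
    next
      case False
      hence "\<not> (d0, v) \<in> ?r" using d0 v by blast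
      hence "v \<in> underS ?r d0" using wo_total[OF W d0(1) v(1)] unfolding underS_def by auto
      hence "z \<in> {0} \<times> Aset 0" using v False unfolding c'_def Aset_def by simp
      thus ?thesis by blast
    qed
  qed
  have Asm: "|{n} \<times> Aset n| \<le>o |Field lam|" for n
  proof -
    have "|{n} \<times> Aset n| \<le>o |Aset n|"
      unfolding card_of_ordLeq[symmetric] by (rule exI[of _ snd]) (auto simp: inj_on_def)
    moreover have "|Aset n| \<le>o lam"
    proof (cases "n = 0")
      case True thus ?thesis unfolding Aset_def using small2 card_of_underS[OF CO d0(1)] by simp
    next
      case False thus ?thesis unfolding Aset_def using cc by simp
    qed
    ultimately show ?thesis using FL ordIso_symmetric ordLeq_ordIso_trans ordLeq_transitive by blast
  qed
  have natl: "|UNIV::nat set| \<le>o |Field lam|" using I infinite_iff_card_of_nat by blast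
  have "|\<Union>n. {n} \<times> Aset n| \<le>o |Field lam|"
    using card_of_UNION_ordLeq_infinite[OF I natl, of "\<lambda>n. {n} \<times> Aset n"] Asm by blast
  hence c'sm: "|c' ` ?F| \<le>o lam" using card_of_mono1[OF img] FL ordLeq_transitive ordLeq_ordIso_trans by blast
  have "|c' ` ?F| \<le>o |?F|"
    using c'sm ordLess_imp_ordLeq[OF lr] FR ordIso_symmetric ordLeq_transitive ordLeq_ordIso_trans by blast
  then obtain h where h: "inj_on h (c' ` ?F)" "h ` (c' ` ?F) \<subseteq> ?F"
    unfolding card_of_ordLeq[symmetric] by blast
  let ?c = "h \<circ> c'"
  have "proper_coloring ?F E ?c"
    using pc' h(1) unfolding proper_coloring_def inj_on_def by (metis comp_apply imageI)
  hence "?r \<le>o |?c ` ?F|" using assms(6) unfolding has_chromatic_number_def by blast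
  moreover have "|?c ` ?F| \<le>o |c' ` ?F|"
  proof -
    have "?c ` ?F = h ` (c' ` ?F)" by (simp add: image_comp)
    thus ?thesis using card_of_image[of h "c' ` ?F"] by simp
  qed
  ultimately have "?r \<le>o lam" using c'sm by (meson ordLeq_transitive)
  thus False using lr not_ordLess_ordLeq by blast
qed

end
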